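(* Every unary FA-presentable quasi-order $(X,\le)$ decomposes as a finite disjoint union of trivial quasi-orders, countably infinite ascending chains, countably infinite descending chains, countably infinite anti-chains, and countably infinite strongly connected components; that is, $X$ can be partitioned into finitely many subsets, each of which, with the induced quasi-order, is either a one-element quasi-order, or a countably infinite set $\{x_1,x_2,\dots\}$ with $x_i\le x_j$ iff $i\le j$ (ascending chain), or one with $x_i\le x_j$ iff $i\ge j$ (descending chain), or a countably infinite set in which $x\le y$ only if $x=y$ (anti-chain), or a countably infinite set in which $x\le y$ for all $x,y$ (strongly connected component).
   Context: A quasi-order is a reflexive transitive binary relation. A structure $(X,\le)$ is unary FA-presentable if there exist a regular language $L\subseteq a^*$ over a one-letter alphabet and a surjection $\phi:L\to X$ such that both $\{(u,v)\in L^2: u\phi=v\phi\}$ and $\{(u,v)\in L^2:u\phi\le v\phi\}$ are regular relations, i.e. the corresponding sets of words $\mathrm{conv}(u,v)$ over $\{a,\$\}^2$ (reading $u$ and $v$ in parallel, padding the shorter with $\$$) are regular languages. *)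

theory Defs
  imports Main "HOL-Library.Disjoint_Sets" "HOL-Library.Countable_Set"
begin

definition regular_lang :: "'b list set \<Rightarrow> bool" where
  "regular_lang L \<longleftrightarrow>
     (\<exists>(N::nat) (q0::nat) (\<delta>::nat \<Rightarrow> 'b \<Rightarrow> nat) (F::nat set).
        q0 < N \<and> (\<forall>q b. q < N \<longrightarrow> \<delta> q b < N) \<and>
        L = {w. foldl \<delta> q0 w \<in> F})"

definition uword :: "nat \<Rightarrow> unit list" where
  "uword n = replicate n ()"

text \<open>Convolution of a^m and a^n over the alphabet {a,$}^2; a letter is a pair of
  booleans, True meaning 'a' and False meaning the padding symbol '$'.\<close>
definition uconv :: "nat \<Rightarrow> nat \<Rightarrow> (bool \<times> bool) list" where
  "uconv m n = map (\<lambda>i. (i < m, i < n)) [0..<max m n]"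

definition unary_regular_rel :: "(nat \<times> nat) set \<Rightarrow> bool" where
  "unary_regular_rel R \<longleftrightarrow> regular_lang ((\<lambda>(u, v). uconv u v) ` R)"

definition quasi_order_on :: "'a set \<Rightarrow> ('a \<Rightarrow> 'a \<Rightarrow> bool) \<Rightarrow> bool" where
  "quasi_order_on X le \<longleftrightarrow>
     (\<forall>x\<in>X. le x x) \<and> (\<forall>x\<in>X. \<forall>y\<in>X. \<forall>z\<in>X. le x y \<longrightarrow> le y z \<longrightarrow> le x z)"

definition unary_FA_presentable :: "'a set \<Rightarrow> ('a \<Rightarrow> 'a \<Rightarrow> bool) \<Rightarrow> bool" where
  "unary_FA_presentable X le \<longleftrightarrow>
     (\<exists>(L::nat set) (\<phi>::nat \<Rightarrow> 'a).
        regular_lang (uword ` L) \<and> \<phi> ` L = X \<and>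
        unary_regular_rel {(u, v). u \<in> L \<and> v \<in> L \<and> \<phi> u = \<phi> v} \<and>
        unary_regular_rel {(u, v). u \<in> L \<and> v \<in> L \<and> le (\<phi> u) (\<phi> v)})"

end

theory Submission
  imports Defs
begin


definition good :: "('a \<Rightarrow> 'a \<Rightarrow> bool) \<Rightarrow> 'a set \<Rightarrow> bool" where
 "good le C \<longleftrightarrow> card C = 1
      \<or> (\<exists>f::nat \<Rightarrow> 'a. bij_betw f UNIV C \<and> (\<forall>i j. le (f i) (f j) \<longleftrightarrow> i \<le> j))
      \<or> (\<exists>f::nat \<Rightarrow> 'a. bij_betw f UNIV C \<and> (\<forall>i j. le (f i) (f j) \<longleftrightarrow> i \<ge> j))
      \<or> (infinite C \<and> countable C \<and> (\<forall>x\<in>C. \<forall>y\<in>C. le x y \<longrightarrow> x = y))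
      \<or> (infinite C \<and> countable C \<and> (\<forall>x\<in>C. \<forall>y\<in>C. le x y))"

definition decomp where
 "decomp le S \<longleftrightarrow> (\<exists>P. finite P \<and> partition_on S P \<and> (\<forall>C\<in>P. good le C))"

definition hered where "hered le H \<longleftrightarrow> (\<forall>S\<subseteq>H. decomp le S)"

lemma decomp_finite: "finite S \<Longrightarrow> decomp le S"
  unfolding decomp_def
  by (rule exI[of _ "(\<lambda>x. {x}) ` S"]) (auto simp: partition_on_singletons good_def)

lemma decomp_union:
  assumes "A \<inter> B = {}" "decomp le A" "decomp le B" shows "decomp le (A \<union> B)"
proof -
  obtain PA where a: "finite PA" "partition_on A PA" "\<forall>C\<in>PA. good le C" using assms(2) decomp_def by blast
  obtain PB where b: "finite PB" "partition_on B PB" "\<forall>C\<in>PB. good le C" using assms(3) decomp_def by blast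
  have "partition_on (A \<union> B) (PA \<union> PB)"
    using a(2) b(2) assms(1) unfolding partition_on_def
    by (auto intro!: disjoint_union)
  then show ?thesis using a b unfolding decomp_def by (intro exI[of _ "PA \<union> PB"]) auto
qed

lemma hered_union: "hered le A \<Longrightarrow> hered le B \<Longrightarrow> hered le (A \<union> B)"
  unfolding hered_def
proof (intro allI impI)
  fix S assume h: "\<forall>S\<subseteq>A. decomp le S" "\<forall>S\<subseteq>B. decomp le S" and S: "S \<subseteq> A \<union> B"
  have "S = (S \<inter> A) \<union> (S - A)" by auto
  moreover have "decomp le (S \<inter> A)" using h(1) by blast
  moreover have "S - A \<subseteq> B" using S by blast
  then have "decomp le (S - A)" using h(2) by blast
  ultimately show "decomp le S" by (metis decomp_union Diff_disjoint Int_Diff_disjoint inf_commute)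
qed

lemma hered_finite: "finite H \<Longrightarrow> hered le H"
  unfolding hered_def by (auto intro: decomp_finite finite_subset)

lemma hered_UN: "finite I \<Longrightarrow> (\<And>i. i \<in> I \<Longrightarrow> hered le (H i)) \<Longrightarrow> hered le (\<Union>i\<in>I. H i)"
  by (induction I rule: finite_induct) (auto intro: hered_union hered_finite)

lemma hered_hom:
  fixes g :: "nat \<Rightarrow> 'a"
  assumes inj: "inj g" and hl: "\<And>i j. le (g i) (g j) \<longleftrightarrow> i = j \<or> (i < j \<and> a) \<or> (j < i \<and> b)"
  shows "hered le (range g)"
  unfolding hered_def
proof (intro allI impI)
  fix S assume S: "S \<subseteq> range g"
  define I where "I = {i. g i \<in> S}"
  have SI: "S = g ` I" using S unfolding I_def by auto
  show "decomp le S"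
  proof (cases "finite I")
    case True then show ?thesis using SI decomp_finite by blast
  next
    case inf: False
    define h where "h = g \<circ> enumerate I"
    have bij: "bij_betw h UNIV S" unfolding h_def SI
      by (rule bij_betw_trans[OF bij_enumerate[OF inf]]) (meson inj inj_on_subset subset_UNIV inj_on_imp_bij_betw)
    have hle: "le (h i) (h j) \<longleftrightarrow> i = j \<or> (i < j \<and> a) \<or> (j < i \<and> b)" for i j
    proof -
      have e: "enumerate I i = enumerate I j \<longleftrightarrow> i = j"
        using strict_mono_eq[OF strict_mono_enumerate[OF inf]] .
      show ?thesis using hl[of "enumerate I i" "enumerate I j"] e inf by (simp add: h_def)
    qed
    have infS: "infinite S" using bij by (metis bij_betw_finite infinite_UNIV_nat)
    have cS: "countable S" using SI by simp
    have "good le S"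
    proof (cases a; cases b)
      assume "a" "b"
      then have "\<forall>x\<in>S. \<forall>y\<in>S. le x y" using bij hle unfolding bij_betw_def
        by (auto simp: linorder_neq_iff)
      then show ?thesis using infS cS unfolding good_def by blast
    next
      assume "a" "\<not> b"
      then have "\<forall>i j. le (h i) (h j) \<longleftrightarrow> i \<le> j" using hle by auto
      then have "\<exists>f::nat \<Rightarrow> 'a. bij_betw f UNIV S \<and> (\<forall>i j. le (f i) (f j) \<longleftrightarrow> i \<le> j)" using bij by blast
      then show ?thesis unfolding good_def by (intro disjI2 disjI1)
    next
      assume "\<not> a" "b"
      then have "\<forall>i j. le (h i) (h j) \<longleftrightarrow> i \<ge> j" using hle by auto
      then have "\<exists>f::nat \<Rightarrow> 'a. bij_betw f UNIV S \<and> (\<forall>i j. le (f i) (f j) \<longleftrightarrow> i \<ge> j)" using bij by blast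
      then show ?thesis unfolding good_def by (intro disjI2 disjI1)
    next
      assume "\<not> a" "\<not> b"
      then have "\<forall>x\<in>S. \<forall>y\<in>S. le x y \<longrightarrow> x = y" using bij hle unfolding bij_betw_def
        by auto
      then show ?thesis using infS cS unfolding good_def by blast
    qed
    moreover have "S \<noteq> {}" using infS by auto
    ultimately show ?thesis unfolding decomp_def
      by (intro exI[of _ "{S}"]) (auto simp: partition_on_space)
  qed
qed



lemma ev_per:
  fixes s :: "nat \<Rightarrow> 'b"
  assumes step: "\<And>n. s (Suc n) = G (s n)" and fin: "finite (range s)"
  shows "\<exists>t c. c > 0 \<and> (\<forall>n\<ge>t. s (n + c) = s n)"
proof -
  have "\<not> inj s" using fin finite_imageD infinite_UNIV_nat by blast
  then obtain i j where ij: "i \<noteq> j" "s i = s j" unfolding inj_def by blast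
  then obtain i j where ij: "i < j" "s i = s j"
    by (metis linorder_neq_iff)
  have k: "s (i + k) = s (j + k)" for k
    by (induction k) (use ij in \<open>auto simp: step\<close>)
  have "\<forall>n\<ge>i. s (n + (j - i)) = s n"
  proof (intro allI impI)
    fix n assume "i \<le> n"
    then have "n + (j - i) = j + (n - i)" "n = i + (n - i)" using ij by auto
    then show "s (n + (j - i)) = s n" using k by metis
  qed
  then show ?thesis using ij by (intro exI[of _ i] exI[of _ "j - i"]) auto
qed

lemma per_mod:
  fixes s :: "nat \<Rightarrow> 'b" and c t x y :: nat
  assumes c: "c > 0" and per: "\<forall>n\<ge>t. s (n + c) = s n"
  and xy: "t \<le> x" "t \<le> y" "x mod c = y mod c"
  shows "s x = s y"
proof -
  have mm: "s (n + m * c) = s n" if "t \<le> n" for n m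
  proof (induction m)
    case (Suc m)
    have "s (n + Suc m * c) = s ((n + m * c) + c)" by (simp add: algebra_simps)
    also have "\<dots> = s (n + m * c)" using per that by (metis le_add1 le_trans)
    finally show ?case using Suc by simp
  qed simp
  have gen: "s a = s b" if ab: "a \<le> b" "t \<le> a" "a mod c = b mod c" for a b
  proof -
    have "c dvd b - a" using ab mod_eq_dvd_iff_nat by metis
    then obtain k where k: "b - a = c * k" by blast
    then have "b = a + k * c" using ab by (simp add: mult.commute)
    then show ?thesis using mm[OF ab(2), of k] by simp
  qed
  show ?thesis
  proof (cases "x \<le> y")
    case True then show ?thesis using gen xy by blast
  next
    case False then show ?thesis using gen[of y x] xy by simp
  qed
qed

lemma uconv_le: "m \<le> n \<Longrightarrow> uconv m n = replicate m (True,True) @ replicate (n-m) (False,True)"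
  by (rule nth_equalityI) (auto simp: uconv_def nth_append max_def)

lemma uconv_ge: "n \<le> m \<Longrightarrow> uconv m n = replicate n (True,True) @ replicate (m-n) (True,False)"
  by (rule nth_equalityI) (auto simp: uconv_def nth_append max_def)

lemma uconv_fst: "length (filter fst (uconv m n)) = m"
  by (cases "m \<le> n") (auto simp: uconv_le uconv_ge filter_replicate)

lemma uconv_snd: "length (filter snd (uconv m n)) = n"
  by (cases "m \<le> n") (auto simp: uconv_le uconv_ge filter_replicate)

lemma uconv_inj: "uconv m n = uconv m' n' \<Longrightarrow> m = m' \<and> n = n'"
  by (metis uconv_fst uconv_snd)

lemma foldl_bound: "q < N \<Longrightarrow> (\<forall>q b. q < N \<longrightarrow> \<delta> q b < N) \<Longrightarrow> foldl \<delta> q w < N"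
  by (induction w arbitrary: q) auto

lemma foldl_rep_Suc: "foldl f q (replicate (Suc n) a) = f (foldl f q (replicate n a)) a"
  by (induction n arbitrary: q) auto



lemma key:
  assumes "unary_regular_rel R"
  shows "\<exists>p>0. \<forall>q. p dvd q \<longrightarrow> (\<forall>x x' d d'. q \<le> x \<longrightarrow> q \<le> x' \<longrightarrow> x mod q = x' mod q \<longrightarrow>
      q \<le> d \<longrightarrow> q \<le> d' \<longrightarrow> d mod q = d' mod q \<longrightarrow>
      ((x, x+d) \<in> R \<longleftrightarrow> (x', x'+d') \<in> R) \<and> ((x+d, x) \<in> R \<longleftrightarrow> (x'+d', x') \<in> R))"
proof -
  obtain N q0 :: nat and \<delta> :: "nat \<Rightarrow> bool \<times> bool \<Rightarrow> nat" and F where A: "q0 < N" "\<forall>q b. q < N \<longrightarrow> \<delta> q b < N"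
    and lang: "(\<lambda>(u, v). uconv u v) ` R = {w. foldl \<delta> q0 w \<in> F}"
  proof -
    have "regular_lang ((\<lambda>(u, v). uconv u v) ` R)" using assms unfolding unary_regular_rel_def .
    then show ?thesis unfolding regular_lang_def by (elim exE conjE) (rule that; assumption)
  qed
  have memb: "(u, v) \<in> R \<longleftrightarrow> foldl \<delta> q0 (uconv u v) \<in> F" for u v
  proof
    assume "(u, v) \<in> R" then show "foldl \<delta> q0 (uconv u v) \<in> F" using lang by blast
  next
    assume "foldl \<delta> q0 (uconv u v) \<in> F"
    then have "uconv u v \<in> (\<lambda>(u, v). uconv u v) ` R" using lang by blast
    then show "(u, v) \<in> R" using uconv_inj by fastforce
  qed
  define s1 where "s1 n = foldl \<delta> q0 (replicate n (True,True))" for n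
  define s2 where "s2 n = map (\<lambda>q. foldl \<delta> q (replicate n (False,True))) [0..<N]" for n
  define s3 where "s3 n = map (\<lambda>q. foldl \<delta> q (replicate n (True,False))) [0..<N]" for n
  have s1b: "s1 n < N" for n unfolding s1_def by (rule foldl_bound[OF A(1) A(2)])
  have "\<exists>t c. c > 0 \<and> (\<forall>n\<ge>t. s1 (n + c) = s1 n)"
  proof (rule ev_per)
    show "s1 (Suc n) = (\<lambda>q. \<delta> q (True,True)) (s1 n)" for n unfolding s1_def by (rule foldl_rep_Suc)
    have "range s1 \<subseteq> {..<N}" using s1b by auto
    then show "finite (range s1)" by (rule finite_subset) simp
  qed
  then obtain t1 c1 where c1: "c1 > 0" "\<forall>n\<ge>t1. s1 (n + c1) = s1 n" by blast
  have "\<exists>t c. c > 0 \<and> (\<forall>n\<ge>t. s2 (n + c) = s2 n)"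
  proof (rule ev_per)
    show "s2 (Suc n) = map (\<lambda>q. \<delta> q (False,True)) (s2 n)" for n unfolding s2_def by (simp add: foldl_rep_Suc del: replicate_Suc)
    have "range s2 \<subseteq> {xs. set xs \<subseteq> {..<N} \<and> length xs = N}"
      unfolding s2_def using foldl_bound[OF _ A(2)] by auto
    then show "finite (range s2)" by (rule finite_subset) (rule finite_lists_length_eq, simp)
  qed
  then obtain t2 c2 where c2: "c2 > 0" "\<forall>n\<ge>t2. s2 (n + c2) = s2 n" by blast
  have "\<exists>t c. c > 0 \<and> (\<forall>n\<ge>t. s3 (n + c) = s3 n)"
  proof (rule ev_per)
    show "s3 (Suc n) = map (\<lambda>q. \<delta> q (True,False)) (s3 n)" for n unfolding s3_def by (simp add: foldl_rep_Suc del: replicate_Suc)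
    have "range s3 \<subseteq> {xs. set xs \<subseteq> {..<N} \<and> length xs = N}"
      unfolding s3_def using foldl_bound[OF _ A(2)] by auto
    then show "finite (range s3)" by (rule finite_subset) (rule finite_lists_length_eq, simp)
  qed
  then obtain t3 c3 where c3: "c3 > 0" "\<forall>n\<ge>t3. s3 (n + c3) = s3 n" by blast
  define p where "p = (t1 + t2 + t3 + 1) * (c1 * c2 * c3)"
  have p0: "p > 0" using c1 c2 c3 by (simp add: p_def)
  have r1: "(x, x+d) \<in> R \<longleftrightarrow> s2 d ! (s1 x) \<in> F" for x d
    using memb[of x "x+d"] s1b[of x] by (simp add: uconv_le s1_def s2_def foldl_append)
  have r2: "(x+d, x) \<in> R \<longleftrightarrow> s3 d ! (s1 x) \<in> F" for x d
    using memb[of "x+d" x] s1b[of x] by (simp add: uconv_ge s1_def s3_def foldl_append)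
  have "\<forall>q. p dvd q \<longrightarrow> (\<forall>x x' d d'. q \<le> x \<longrightarrow> q \<le> x' \<longrightarrow> x mod q = x' mod q \<longrightarrow>
      q \<le> d \<longrightarrow> q \<le> d' \<longrightarrow> d mod q = d' mod q \<longrightarrow>
      ((x, x+d) \<in> R \<longleftrightarrow> (x', x'+d') \<in> R) \<and> ((x+d, x) \<in> R \<longleftrightarrow> (x'+d', x') \<in> R))"
  proof (intro allI impI)
    fix q x x' d d' assume pq: "p dvd q" and h: "q \<le> x" "q \<le> x'" "x mod q = x' mod q"
      "q \<le> d" "q \<le> d'" "d mod q = d' mod q"
    show "((x, x+d) \<in> R \<longleftrightarrow> (x', x'+d') \<in> R) \<and> ((x+d, x) \<in> R \<longleftrightarrow> (x'+d', x') \<in> R)"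
    proof (cases "q = 0")
      case True then show ?thesis using h by simp
    next
      case False
      then have pq': "p \<le> q" using pq by (simp add: dvd_imp_le)
      have "1 \<le> c1 * c2 * c3" using c1 c2 c3 by simp
      then have "(t1 + t2 + t3 + 1) * 1 \<le> p" unfolding p_def by (rule mult_le_mono2)
      then have t: "t1 \<le> q" "t2 \<le> q" "t3 \<le> q" using pq' by simp_all
      have "c1 dvd p" "c2 dvd p" "c3 dvd p" unfolding p_def by simp_all
      then have dv: "c1 dvd q" "c2 dvd q" "c3 dvd q" using pq dvd_trans by blast+
      have "x mod c1 = x' mod c1" using h(3) dv(1) by (metis mod_mod_cancel)
      then have e1: "s1 x = s1 x'" by (rule per_mod[OF c1(1) c1(2), rotated 2]) (use t h in linarith)+
      have "d mod c2 = d' mod c2" using h(6) dv(2) by (metis mod_mod_cancel)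
      then have e2: "s2 d = s2 d'" by (rule per_mod[OF c2(1) c2(2), rotated 2]) (use t h in linarith)+
      have "d mod c3 = d' mod c3" using h(6) dv(3) by (metis mod_mod_cancel)
      then have e3: "s3 d = s3 d'" by (rule per_mod[OF c3(1) c3(2), rotated 2]) (use t h in linarith)+
      show ?thesis using r1[of x d] r1[of x' d'] r2[of x d] r2[of x' d'] e1 e2 e3 by simp
    qed
  qed
  then show ?thesis using p0 by blast
qed



lemma key_obtain:
  assumes "unary_regular_rel R"
  obtains p where "p > 0" "\<And>q x x' d d'. p dvd q \<Longrightarrow> q \<le> x \<Longrightarrow> q \<le> x' \<Longrightarrow> x mod q = x' mod q \<Longrightarrow>
      q \<le> d \<Longrightarrow> q \<le> d' \<Longrightarrow> d mod q = d' mod q \<Longrightarrow>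
      ((x, x+d) \<in> R \<longleftrightarrow> (x', x'+d') \<in> R) \<and> ((x+d, x) \<in> R \<longleftrightarrow> (x'+d', x') \<in> R)"
proof -
  from key[OF assms] obtain p where p: "p > 0 \<and> (\<forall>q. p dvd q \<longrightarrow> (\<forall>x x' d d'. q \<le> x \<longrightarrow> q \<le> x' \<longrightarrow> x mod q = x' mod q \<longrightarrow>
      q \<le> d \<longrightarrow> q \<le> d' \<longrightarrow> d mod q = d' mod q \<longrightarrow>
      ((x, x+d) \<in> R \<longleftrightarrow> (x', x'+d') \<in> R) \<and> ((x+d, x) \<in> R \<longleftrightarrow> (x'+d', x') \<in> R)))" ..
  have p0: "p > 0" using p by (rule conjunct1)
  have H: "\<forall>q. p dvd q \<longrightarrow> (\<forall>x x' d d'. q \<le> x \<longrightarrow> q \<le> x' \<longrightarrow> x mod q = x' mod q \<longrightarrow>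
      q \<le> d \<longrightarrow> q \<le> d' \<longrightarrow> d mod q = d' mod q \<longrightarrow>
      ((x, x+d) \<in> R \<longleftrightarrow> (x', x'+d') \<in> R) \<and> ((x+d, x) \<in> R \<longleftrightarrow> (x'+d', x') \<in> R))" using p by (rule conjunct2)
  show thesis
  proof (rule that[OF p0])
    fix q x x' d d' assume a: "p dvd q" "q \<le> x" "q \<le> x'" "x mod q = x' mod q" "q \<le> d" "q \<le> d'" "d mod q = d' mod q"
    show "((x, x+d) \<in> R \<longleftrightarrow> (x', x'+d') \<in> R) \<and> ((x+d, x) \<in> R \<longleftrightarrow> (x'+d', x') \<in> R)"
      using H[rule_format, OF a] .
  qed
qed

theorem corollary5p9:
  fixes X :: "'a set" and le :: "'a \<Rightarrow> 'a \<Rightarrow> bool"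
  assumes "quasi_order_on X le"
    and "unary_FA_presentable X le"
  shows "\<exists>P. finite P \<and> partition_on X P \<and>
     (\<forall>C\<in>P.
        card C = 1
      \<or> (\<exists>f::nat \<Rightarrow> 'a. bij_betw f UNIV C \<and> (\<forall>i j. le (f i) (f j) \<longleftrightarrow> i \<le> j))
      \<or> (\<exists>f::nat \<Rightarrow> 'a. bij_betw f UNIV C \<and> (\<forall>i j. le (f i) (f j) \<longleftrightarrow> i \<ge> j))
      \<or> (infinite C \<and> countable C \<and> (\<forall>x\<in>C. \<forall>y\<in>C. le x y \<longrightarrow> x = y))
      \<or> (infinite C \<and> countable C \<and> (\<forall>x\<in>C. \<forall>y\<in>C. le x y)))"
proof -
  have refl: "\<And>x. x \<in> X \<Longrightarrow> le x x" using assms(1) unfolding quasi_order_on_def by blast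
  obtain L :: "nat set" and \<phi> :: "nat \<Rightarrow> 'a" where img: "\<phi> ` L = X"
    and E: "unary_regular_rel {(u, v). u \<in> L \<and> v \<in> L \<and> \<phi> u = \<phi> v}"
    and R: "unary_regular_rel {(u, v). u \<in> L \<and> v \<in> L \<and> le (\<phi> u) (\<phi> v)}"
    using assms(2) unfolding unary_FA_presentable_def by blast
  define ES where "ES = {(u, v). u \<in> L \<and> v \<in> L \<and> \<phi> u = \<phi> v}"
  define RS where "RS = {(u, v). u \<in> L \<and> v \<in> L \<and> le (\<phi> u) (\<phi> v)}"
  have Er: "unary_regular_rel ES" using E unfolding ES_def .
  have Rr: "unary_regular_rel RS" using R unfolding RS_def .
  obtain pE where pE: "pE > 0" and PE: "\<And>q x x' d d'. pE dvd q \<Longrightarrow> q \<le> x \<Longrightarrow> q \<le> x' \<Longrightarrow> x mod q = x' mod q \<Longrightarrow>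
      q \<le> d \<Longrightarrow> q \<le> d' \<Longrightarrow> d mod q = d' mod q \<Longrightarrow>
      ((x, x+d) \<in> ES \<longleftrightarrow> (x', x'+d') \<in> ES) \<and> ((x+d, x) \<in> ES \<longleftrightarrow> (x'+d', x') \<in> ES)"
    by (rule key_obtain[OF Er]) (rule that)
  obtain pR where pR: "pR > 0" and PR: "\<And>q x x' d d'. pR dvd q \<Longrightarrow> q \<le> x \<Longrightarrow> q \<le> x' \<Longrightarrow> x mod q = x' mod q \<Longrightarrow>
      q \<le> d \<Longrightarrow> q \<le> d' \<Longrightarrow> d mod q = d' mod q \<Longrightarrow>
      ((x, x+d) \<in> RS \<longleftrightarrow> (x', x'+d') \<in> RS) \<and> ((x+d, x) \<in> RS \<longleftrightarrow> (x'+d', x') \<in> RS)"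
    by (rule key_obtain[OF Rr]) (rule that)
  define p where "p = pE * pR"
  have p0: "p > 0" using pE pR by (simp add: p_def)
  have PE': "\<And>x x' d d'. p \<le> x \<Longrightarrow> p \<le> x' \<Longrightarrow> x mod p = x' mod p \<Longrightarrow>
      p \<le> d \<Longrightarrow> p \<le> d' \<Longrightarrow> d mod p = d' mod p \<Longrightarrow>
      ((x, x+d) \<in> ES \<longleftrightarrow> (x', x'+d') \<in> ES) \<and> ((x+d, x) \<in> ES \<longleftrightarrow> (x'+d', x') \<in> ES)"
    by (rule PE) (simp_all add: p_def)
  have PR': "\<And>x x' d d'. p \<le> x \<Longrightarrow> p \<le> x' \<Longrightarrow> x mod p = x' mod p \<Longrightarrow>
      p \<le> d \<Longrightarrow> p \<le> d' \<Longrightarrow> d mod p = d' mod p \<Longrightarrow>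
      ((x, x+d) \<in> RS \<longleftrightarrow> (x', x'+d') \<in> RS) \<and> ((x+d, x) \<in> RS \<longleftrightarrow> (x'+d', x') \<in> RS)"
    by (rule PR) (simp_all add: p_def)
  define A where "A r = {x \<in> L. p \<le> x \<and> x mod p = r}" for r
  have Lsplit: "L = {x \<in> L. x < p} \<union> (\<Union>r\<in>{..<p}. A r)"
    using p0 unfolding A_def by (auto simp: not_less)
  have Xsplit: "X = \<phi> ` {x \<in> L. x < p} \<union> (\<Union>r\<in>{..<p}. \<phi> ` A r)"
    using img Lsplit by (metis image_UN image_Un)
  have consb: "((x, y) \<in> S \<longleftrightarrow> (x', y') \<in> S) \<and> ((y, x) \<in> S \<longleftrightarrow> (y', x') \<in> S)"
    if S: "S = ES \<or> S = RS" and xy: "x \<in> A r" "y \<in> A r" "x' \<in> A r" "y' \<in> A r" "x < y" "x' < y'" for S x y x' y' r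
  proof -
    have m: "x mod p = x' mod p" "p \<le> x" "p \<le> x'" using xy unfolding A_def by auto
    have "x mod p = y mod p" "x' mod p = y' mod p" using xy unfolding A_def by auto
    then have "p dvd (y - x)" "p dvd (y' - x')" using xy(5,6) mod_eq_dvd_iff_nat[of x y p] mod_eq_dvd_iff_nat[of x' y' p] by auto
    then have d: "(y - x) mod p = (y' - x') mod p" "p \<le> y - x" "p \<le> y' - x'"
      using xy(5,6) by (auto intro: dvd_imp_le)
    have yy: "x + (y - x) = y" "x' + (y' - x') = y'" using xy(5,6) by auto
    have "((x, x + (y - x)) \<in> S \<longleftrightarrow> (x', x' + (y' - x')) \<in> S) \<and> ((x + (y - x), x) \<in> S \<longleftrightarrow> (x' + (y' - x'), x') \<in> S)"
      using S
    proof
      assume "S = ES" then show ?thesis using PE'[OF m(2) m(3) m(1) d(2) d(3) d(1)] by simp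
    next
      assume "S = RS" then show ?thesis using PR'[OF m(2) m(3) m(1) d(2) d(3) d(1)] by simp
    qed
    then show ?thesis unfolding yy .
  qed
  have cons: "(x, y) \<in> S \<longleftrightarrow> (x', y') \<in> S"
    if "S = ES \<or> S = RS" "x \<in> A r" "y \<in> A r" "x' \<in> A r" "y' \<in> A r" "x < y" "x' < y'" for S x y x' y' r
    using consb[OF that] by (rule conjunct1)
  have cons': "(y, x) \<in> S \<longleftrightarrow> (y', x') \<in> S"
    if "S = ES \<or> S = RS" "x \<in> A r" "y \<in> A r" "x' \<in> A r" "y' \<in> A r" "x < y" "x' < y'" for S x y x' y' r
    using consb[OF that] by (rule conjunct2)
  have hA: "hered le (\<phi> ` A r)" for r
  proof (cases "finite (A r)")
    case True then show ?thesis by (simp add: hered_finite)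
  next
    case inf: False
    define e where "e = enumerate (A r)"
    have eA: "e i \<in> A r" for i using range_enumerate[OF inf] unfolding e_def by blast
    have eL: "e i \<in> L" for i using eA unfolding A_def by blast
    have emono: "e i < e j \<longleftrightarrow> i < j" for i j unfolding e_def using inf by simp
    have rr: "range e = A r" using range_enumerate[OF inf] unfolding e_def .
    have rng: "\<phi> ` A r = range (\<phi> \<circ> e)" by (simp only: image_comp[symmetric] rr)
    have ES_iff: "(u, v) \<in> ES \<longleftrightarrow> \<phi> u = \<phi> v" if "u \<in> L" "v \<in> L" for u v using that ES_def by simp
    have RS_iff: "(u, v) \<in> RS \<longleftrightarrow> le (\<phi> u) (\<phi> v)" if "u \<in> L" "v \<in> L" for u v using that RS_def by simp
    have e01: "e 0 < e 1" using emono by simp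
    have cE: "\<phi> (e i) = \<phi> (e j) \<longleftrightarrow> \<phi> (e 0) = \<phi> (e 1)" if "i < j" for i j
      using cons[of ES "e i" r "e j" "e 0" "e 1"] eA eL e01 emono that ES_iff by simp
    have cR1: "le (\<phi> (e i)) (\<phi> (e j)) \<longleftrightarrow> le (\<phi> (e 0)) (\<phi> (e 1))" if "i < j" for i j
      using cons[of RS "e i" r "e j" "e 0" "e 1"] eA eL e01 emono that RS_iff by simp
    have cR2: "le (\<phi> (e j)) (\<phi> (e i)) \<longleftrightarrow> le (\<phi> (e 1)) (\<phi> (e 0))" if "i < j" for i j
      using cons'[of RS "e i" r "e j" "e 0" "e 1"] eA eL e01 emono that RS_iff by simp
    show ?thesis
    proof (cases "\<phi> (e 0) = \<phi> (e 1)")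
      case True
      have "(\<phi> \<circ> e) i = \<phi> (e 0)" for i using cE[of 0 i] True by (cases i) auto
      then have "range (\<phi> \<circ> e) = {\<phi> (e 0)}" by auto
      then show ?thesis using rng by (simp add: hered_finite)
    next
      case False
      have inj: "inj (\<phi> \<circ> e)"
      proof (rule injI)
        fix i j assume "(\<phi> \<circ> e) i = (\<phi> \<circ> e) j"
        then show "i = j" using cE[of i j] cE[of j i] False by (metis comp_apply linorder_neq_iff)
      qed
      have hl: "le ((\<phi> \<circ> e) i) ((\<phi> \<circ> e) j) \<longleftrightarrow> i = j \<or> (i < j \<and> le (\<phi> (e 0)) (\<phi> (e 1))) \<or> (j < i \<and> le (\<phi> (e 1)) (\<phi> (e 0)))" for i j
      proof -
        have "\<phi> (e i) \<in> X" using img eL by blast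
        then show ?thesis using refl cR1[of i j] cR2[of j i] by (cases i j rule: linorder_cases) auto
      qed
      show ?thesis using hered_hom[OF inj hl] rng by simp
    qed
  qed
  have "hered le (\<phi> ` {x \<in> L. x < p})" by (rule hered_finite) simp
  moreover have "hered le (\<Union>r\<in>{..<p}. \<phi> ` A r)" by (rule hered_UN) (simp_all add: hA)
  ultimately have "hered le X" unfolding Xsplit by (rule hered_union)
  then have "decomp le X" unfolding hered_def by blast
  then show ?thesis unfolding decomp_def good_def .
qed


end
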